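(* Let $t>2$ be an integer and $n=2t+1$. In the cyclic group $\mathbb{Z}_{2t+1}$, the family of sets $\{2,3\},\{4,5\},\dots,\{2t-2,2t-1\}$ (i.e. $\{2i,2i+1\}$ for $1\le i\le t-1$) is a $(2t+1,t-1,2,0,t-1)$-DPDF which is not an EPDF (for any parameters).
   Context: In an additive group $G$ with identity $0$, let $G^*=G\setminus\{0\}$. For $D\subseteq G$, $\Delta(D)$ is the multiset $\{x-y:x,y\in D,x\ne y\}$; for $D_1,D_2\subseteq G$, $\Delta(D_1,D_2)$ is the multiset $\{x-y:x\in D_1,y\in D_2\}$. For a family $A=\{A_1,\dots,A_s\}$ of pairwise disjoint subsets, ${\rm Int}(A)=\bigcup_i\Delta(A_i)$ and ${\rm Ext}(A)=\bigcup_{i\ne j}\Delta(A_i,A_j)$ (multiset unions). For $|G|=v$, a $(v,s,k,\lambda,\mu)$-DPDF is a family of $s$ pairwise disjoint $k$-subsets of $G^*$ with union $S$ such that ${\rm Int}(A)$ contains each element of $S$ exactly $\lambda$ times and each element of $G\setminus(S\cup\{0\})$ exactly $\mu$ times; a $(v,s,k,\lambda,\mu)$-EPDF is defined the same way using ${\rm Ext}(A)$. *)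

theory Defs
  imports Main "HOL-Library.Multiset"
begin

text \<open>The cyclic group Z_n is modelled by the integers {0..<n} with addition modulo n.
  A family of subsets is a list of sets (indexed by 0..<s).\<close>

definition Zn :: "int \<Rightarrow> int set" where
  "Zn n = {0..<n}"

definition Delta :: "int \<Rightarrow> int set \<Rightarrow> int multiset" where
  "Delta n D = image_mset (\<lambda>(x, y). (x - y) mod n) (mset_set {(x, y). x \<in> D \<and> y \<in> D \<and> x \<noteq> y})"

definition Delta2 :: "int \<Rightarrow> int set \<Rightarrow> int set \<Rightarrow> int multiset" where
  "Delta2 n D1 D2 = image_mset (\<lambda>(x, y). (x - y) mod n) (mset_set (D1 \<times> D2))"

definition IntDiff :: "int \<Rightarrow> int set list \<Rightarrow> int multiset" where
  "IntDiff n A = (\<Sum>i<length A. Delta n (A ! i))"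

definition ExtDiff :: "int \<Rightarrow> int set list \<Rightarrow> int multiset" where
  "ExtDiff n A = (\<Sum>(i, j) \<in> {(i, j). i < length A \<and> j < length A \<and> i \<noteq> j}. Delta2 n (A ! i) (A ! j))"

definition PDF_shape :: "(int \<Rightarrow> int set list \<Rightarrow> int multiset) \<Rightarrow> int \<Rightarrow> nat \<Rightarrow> nat \<Rightarrow> nat \<Rightarrow> nat \<Rightarrow> int set list \<Rightarrow> bool" where
  "PDF_shape M n s k lam mu A \<longleftrightarrow>
     length A = s \<and>
     (\<forall>i<s. A ! i \<subseteq> Zn n - {0} \<and> card (A ! i) = k) \<and>
     (\<forall>i<s. \<forall>j<s. i \<noteq> j \<longrightarrow> A ! i \<inter> A ! j = {}) \<and>
     (\<forall>g \<in> \<Union>(set A). count (M n A) g = lam) \<and>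
     (\<forall>g \<in> Zn n - (\<Union>(set A) \<union> {0}). count (M n A) g = mu)"

definition DPDF :: "int \<Rightarrow> nat \<Rightarrow> nat \<Rightarrow> nat \<Rightarrow> nat \<Rightarrow> int set list \<Rightarrow> bool" where
  "DPDF n s k lam mu A \<longleftrightarrow> PDF_shape IntDiff n s k lam mu A"

definition EPDF :: "int \<Rightarrow> nat \<Rightarrow> nat \<Rightarrow> nat \<Rightarrow> nat \<Rightarrow> int set list \<Rightarrow> bool" where
  "EPDF n s k lam mu A \<longleftrightarrow> PDF_shape ExtDiff n s k lam mu A"

end

theory Submission
  imports Defs
begin

lemma cnt_img:
  assumes "finite X"
  shows "count (image_mset f (mset_set X)) g = card {x\<in>X. f x = g}"
proof -
  have "count (image_mset f (mset_set X)) g = (\<Sum>x | x \<in># mset_set X \<and> g = f x. count (mset_set X) x)"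
    by (rule count_image_mset')
  also have "\<dots> = (\<Sum>x | x \<in> X \<and> f x = g. 1)"
    using assms by (intro sum.cong) auto
  also have "\<dots> = card {x\<in>X. f x = g}" by simp
  finally show ?thesis .
qed

lemma mod_small:
  fixes d n :: int
  assumes "n > 0" "-n \<le> d" "d < n"
  shows "d mod n = (if d \<ge> 0 then d else d + n)"
proof (cases "d \<ge> 0")
  case True then show ?thesis using assms by simp
next
  case False
  have "d mod n = (d + n) mod n" by simp
  also have "\<dots> = d + n" using assms False by (intro mod_pos_pos_trivial) auto
  finally show ?thesis using False by simp
qed

lemma div2_iff: "(x::int) div 2 = m \<longleftrightarrow> x = 2*m \<or> x = 2*m+1"
  by presburger

lemma ext_count:
  fixes t :: nat and g c :: int
  assumes t2: "t > 2"
  defines "n \<equiv> 2 * int t + 1"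
  defines "A \<equiv> map (\<lambda>i. {2 * int i, 2 * int i + 1}) [1..<t]"
  assumes g: "2 \<le> g" "g \<le> 3" "g \<le> 2 * int t - 1 - 2"
  shows "count (ExtDiff n A) g = nat (2 * int t - 2 - g)"
proof -
  let ?f = "\<lambda>(x::int, y::int). (x - y) mod n"
  let ?I = "{(i, j). i < length A \<and> j < length A \<and> i \<noteq> j}"
  let ?B = "\<lambda>p. {q \<in> A ! fst p \<times> A ! snd p. ?f q = g}"
  have lenA: "length A = t - 1" unfolding A_def by simp
  have Ai: "A ! i = {2 * int (i+1), 2 * int (i+1) + 1}" if "i < t - 1" for i
    unfolding A_def using that by (simp add: nth_map_upt add.commute)
  have memA: "x \<in> A ! i \<longleftrightarrow> x div 2 = int i + 1" if "i < t - 1" for i x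
    unfolding Ai[OF that] div2_iff by auto
  have finI: "finite ?I" by (rule finite_subset[of _ "{..<length A} \<times> {..<length A}"]) auto
  have "count (ExtDiff n A) g = (\<Sum>p\<in>?I. count (Delta2 n (A ! fst p) (A ! snd p)) g)"
    unfolding ExtDiff_def count_sum by (intro sum.cong) auto
  also have "\<dots> = (\<Sum>p\<in>?I. card (?B p))"
    unfolding Delta2_def
    by (intro sum.cong refl cnt_img) (auto simp: lenA Ai)
  also have "\<dots> = card (\<Union>p\<in>?I. ?B p)"
  proof (rule card_UN_disjoint[symmetric])
    show "finite ?I" by (rule finI)
    show "\<forall>p\<in>?I. finite (?B p)" by (auto simp: lenA Ai)
    show "\<forall>p\<in>?I. \<forall>p'\<in>?I. p \<noteq> p' \<longrightarrow> ?B p \<inter> ?B p' = {}"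
      by (auto simp: lenA memA)
  qed
  also have "(\<Union>p\<in>?I. ?B p) = (\<lambda>y. (y + g, y)) ` {2..2 * int t - 1 - g}"
  proof (intro equalityI subsetI)
    fix q assume "q \<in> (\<Union>p\<in>?I. ?B p)"
    then obtain i j x y where q: "q = (x, y)" and ij: "i < t - 1" "j < t - 1" "i \<noteq> j"
      and xy: "x \<in> A ! i" "y \<in> A ! j" "(x - y) mod n = g"
      by (auto simp: lenA)
    have xd: "x div 2 = int i + 1" and yd: "y div 2 = int j + 1" using xy ij memA by auto
    have xb: "2 \<le> x" "x \<le> 2 * int t - 1" using xd ij t2 unfolding div2_iff by auto
    have yb: "2 \<le> y" "y \<le> 2 * int t - 1" using yd ij t2 unfolding div2_iff by auto
    have "(x - y) mod n = (if x - y \<ge> 0 then x - y else x - y + n)"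
      using xb yb unfolding n_def by (intro mod_small) auto
    with xy(3) g xb yb have "x - y = g" unfolding n_def by (auto split: if_splits)
    then show "q \<in> (\<lambda>y. (y + g, y)) ` {2..2 * int t - 1 - g}"
      using q xb yb by (auto intro!: image_eqI[where x = y])
  next
    fix q assume "q \<in> (\<lambda>y. (y + g, y)) ` {2..2 * int t - 1 - g}"
    then obtain y where q: "q = (y + g, y)" and y: "2 \<le> y" "y \<le> 2 * int t - 1 - g" by auto
    have b1: "1 \<le> y div 2" "(y + g) div 2 \<le> int t - 1" "y div 2 \<noteq> (y + g) div 2" "1 \<le> (y + g) div 2" "y div 2 \<le> (y + g) div 2"
      using y g by presburger+
    define i where "i = nat ((y + g) div 2 - 1)"
    define j where "j = nat (y div 2 - 1)"
    have ii: "int i + 1 = (y + g) div 2" and jj: "int j + 1 = y div 2"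
      using b1 unfolding i_def j_def by auto
    have ij: "i < t - 1" "j < t - 1" "i \<noteq> j" using b1 ii jj t2 by auto
    have "y + g \<in> A ! i" unfolding memA[OF ij(1)] using ii by simp
    moreover have "y \<in> A ! j" unfolding memA[OF ij(2)] using jj by simp
    moreover have "g mod n = g" using g t2 unfolding n_def by auto
    ultimately show "q \<in> (\<Union>p\<in>?I. ?B p)" using q ij
      by (auto simp: lenA intro!: bexI[where x = "(i, j)"])
  qed
  also have "card ((\<lambda>y. (y + g, y)) ` {2..2 * int t - 1 - g}) = card {2..2 * int t - 1 - g}"
    by (rule card_image) (auto simp: inj_on_def)
  also have "\<dots> = nat (2 * int t - 2 - g)" by simp
  finally show ?thesis .
qed

theorem mainTheorem13:
  fixes t :: nat
  assumes "t > 2"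
  defines "n \<equiv> 2 * int t + 1"
  defines "A \<equiv> map (\<lambda>i. {2 * int i, 2 * int i + 1}) [1..<t]"
  shows "DPDF n (t - 1) 2 0 (t - 1) A \<and> \<not> (\<exists>s k lam mu. EPDF n s k lam mu A)"
proof -
  have lenA: "length A = t - 1" unfolding A_def by simp
  have Ai: "A ! i = {2 * int (i+1), 2 * int (i+1) + 1}" if "i < t - 1" for i
    unfolding A_def using that by (simp add: nth_map_upt add.commute)
  have memA: "x \<in> A ! i \<longleftrightarrow> x div 2 = int i + 1" if "i < t - 1" for i x
    unfolding Ai[OF that] div2_iff by auto
  have UA: "\<Union>(set A) = {2..2 * int t - 1}"
  proof (intro equalityI subsetI)
    fix x assume "x \<in> \<Union>(set A)"
    then obtain i where "i < t - 1" "x \<in> A ! i" by (auto simp: in_set_conv_nth lenA)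
    then show "x \<in> {2..2 * int t - 1}" using memA div2_iff by auto
  next
    fix x assume x: "x \<in> {2..2 * int t - 1}"
    have b1: "1 \<le> x div 2" "x div 2 \<le> int t - 1" proof -
      have "2 \<le> x" "x \<le> 2 * int t - 1" using x by auto
      then show "1 \<le> x div 2" "x div 2 \<le> int t - 1" by presburger+
    qed
    define i where "i = nat (x div 2 - 1)"
    have ii: "int i + 1 = x div 2" using b1 unfolding i_def by auto
    have i: "i < t - 1" using b1 ii by auto
    have "x \<in> A ! i" unfolding memA[OF i] using ii by simp
    moreover have "A ! i \<in> set A" using i lenA by simp
    ultimately show "x \<in> \<Union>(set A)" by blast
  qed
  have m1: "(-1) mod n = 2 * int t" unfolding n_def
    by (simp add: mod_small)
  have m2: "1 mod n = 1" unfolding n_def using assms(1) by simp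
  have cD: "count (Delta n (A ! i)) g = (if g = 1 \<or> g = 2 * int t then 1 else 0)"
    if i: "i < t - 1" for i g
  proof -
    define a where "a = 2 * int (i+1)"
    have P: "{(x, y). x \<in> A ! i \<and> y \<in> A ! i \<and> x \<noteq> y} = {(a, a+1), (a+1, a)}"
      unfolding Ai[OF i] a_def by auto
    have "count (Delta n (A ! i)) g = card {q \<in> {(a, a+1), (a+1, a)}. (\<lambda>(x, y). (x - y) mod n) q = g}"
      unfolding Delta_def P by (rule cnt_img) simp
    also have "{q \<in> {(a, a+1), (a+1, a)}. (\<lambda>(x, y). (x - y) mod n) q = g}
       = (if g = 2 * int t then {(a, a+1)} else {}) \<union> (if g = 1 then {(a+1, a)} else {})"
      using m1 m2 by auto
    also have "card \<dots> = (if g = 1 \<or> g = 2 * int t then 1 else 0)"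
      using assms(1) by auto
    finally show ?thesis .
  qed
  have cI: "count (IntDiff n A) g = (if g = 1 \<or> g = 2 * int t then t - 1 else 0)" for g
  proof -
    have "count (IntDiff n A) g = (\<Sum>i<t - 1. count (Delta n (A ! i)) g)"
      unfolding IntDiff_def count_sum lenA ..
    also have "\<dots> = (\<Sum>i<t - 1. (if g = 1 \<or> g = 2 * int t then 1 else 0))"
      by (intro sum.cong refl) (simp add: cD)
    finally show ?thesis by simp
  qed
  have D: "DPDF n (t - 1) 2 0 (t - 1) A"
    unfolding DPDF_def PDF_shape_def
  proof (intro conjI allI impI ballI)
    show "length A = t - 1" by (rule lenA)
  next
    fix i assume "i < t - 1"
    then show "A ! i \<subseteq> Zn n - {0}" "card (A ! i) = 2"
      using Ai[of i] unfolding Zn_def n_def by auto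
  next
    fix i j assume "i < t - 1" "j < t - 1" "i \<noteq> j"
    then show "A ! i \<inter> A ! j = {}" using memA by auto
  next
    fix g assume "g \<in> \<Union>(set A)"
    then show "count (IntDiff n A) g = 0" unfolding UA cI by auto
  next
    fix g assume "g \<in> Zn n - (\<Union>(set A) \<union> {0})"
    then have "g = 1 \<or> g = 2 * int t" unfolding UA Zn_def n_def by auto
    then show "count (IntDiff n A) g = t - 1" unfolding cI by auto
  qed
  have E: "\<not> (\<exists>s k lam mu. EPDF n s k lam mu A)"
  proof
    assume "\<exists>s k lam mu. EPDF n s k lam mu A"
    then obtain s k lam mu where "EPDF n s k lam mu A" by blast
    then have h: "\<forall>g \<in> \<Union>(set A). count (ExtDiff n A) g = lam"
      unfolding EPDF_def PDF_shape_def by blast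
    have two: "2 \<in> \<Union>(set A)" and three: "3 \<in> \<Union>(set A)" unfolding UA using assms(1) by auto
    have "count (ExtDiff n A) 2 = lam" using h two by blast
    moreover have "count (ExtDiff n A) 3 = lam" using h three by blast
    ultimately have "count (ExtDiff n A) 2 = count (ExtDiff n A) 3" by simp
    moreover have "count (ExtDiff n A) 2 = nat (2 * int t - 2 - 2)"
      unfolding n_def A_def by (rule ext_count) (use assms(1) in auto)
    moreover have "count (ExtDiff n A) 3 = nat (2 * int t - 2 - 3)"
      unfolding n_def A_def by (rule ext_count) (use assms(1) in auto)
    ultimately show False using assms(1) by simp
  qed
  show ?thesis using D E by blast
qed

end
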